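(* For the modular data of the quantum double of $S_3$, each of the trace two modular invariants $Z_3,Z_{23},Z_{32},Z_{45},Z_{54},Z_{(45)},Z_{(54)}$ has, up to equivalence, exactly one matching nimrep.
   Context: Primaries $0,\dots,7$, all self-conjugate, with $S=\frac16\begin{pmatrix}1&1&2&2&2&2&3&3\\1&1&2&2&2&2&-3&-3\\2&2&4&-2&-2&-2&0&0\\2&2&-2&4&-2&-2&0&0\\2&2&-2&-2&-2&4&0&0\\2&2&-2&-2&4&-2&0&0\\3&-3&0&0&0&0&3&-3\\3&-3&0&0&0&0&-3&3\end{pmatrix}$, fusion coefficients $N_{\lambda\mu}^\nu=\sum_\rho S_{\lambda\rho}S_{\mu\rho}\overline{S_{\nu\rho}}/S_{0\rho}$. Matrices are written as $\sum Z_{\lambda\mu}\chi_\lambda\chi_\mu^*$, and for linear forms $s,t$ in the $\chi$'s, $st^*$ is the matrix of products of coefficients. $Z_3=|\chi_0+\chi_1+\chi_2+\chi_3|^2+\chi_2\chi_3^*+\chi_3\chi_2^*-|\chi_2|^2-|\chi_3|^2$. With $s_2=\chi_0+\chi_1+2\chi_2$, $s_3=\chi_0+\chi_1+2\chi_3$, $s_4=\chi_0+\chi_2+\chi_6$, $s_5=\chi_0+\chi_3+\chi_6$: $Z_{ij}=s_is_j^*$. $Z_{(45)}=(\chi_0+\chi_3)(\chi_0+\chi_2)^*+\chi_1\chi_6^*+\chi_3\chi_6^*+\chi_6\chi_1^*+\chi_6\chi_2^*+|\chi_7|^2$, $Z_{(54)}=Z_{(45)}^t$. A nimrep of dimension $n$: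 non-negative integer $n\times n$ matrices $G_\lambda$ with $G_0=I$, $G_{\bar\lambda}=G_\lambda^t$, $G_\lambda G_\mu=\sum_\nu N_{\lambda\mu}^\nu G_\nu$; nimreps are equivalent if conjugate by a common permutation matrix. $\mathrm{Exp}(Z)$ is the multiset with $Z_{\mu\mu}$ copies of $\mu$. A nimrep matches $Z$ if $n=\mathrm{Tr}\,Z$ and the $G_\lambda$ are simultaneously unitarily diagonalisable with joint eigenvalues $(S_{\lambda\mu}/S_{0\mu})_\lambda$, $\mu$ running through $\mathrm{Exp}(Z)$ with multiplicity. *)

theory Defs
  imports Complex_Main
begin

text \<open>Modular data of the quantum double of S3. Primaries are 0..7 (all self-conjugate).
  Matrices are functions nat \<Rightarrow> nat \<Rightarrow> _, only entries with indices in range matter.\<close>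

definition S_int :: "int list list" where
  "S_int = [[1,1,2,2,2,2,3,3],
            [1,1,2,2,2,2,-3,-3],
            [2,2,4,-2,-2,-2,0,0],
            [2,2,-2,4,-2,-2,0,0],
            [2,2,-2,-2,-2,4,0,0],
            [2,2,-2,-2,4,-2,0,0],
            [3,-3,0,0,0,0,3,-3],
            [3,-3,0,0,0,0,-3,3]]"

definition S :: "nat \<Rightarrow> nat \<Rightarrow> real" where
  "S l m = real_of_int (S_int ! l ! m) / 6"

text \<open>Fusion coefficients N_{l m}^v = sum_r S_{l r} S_{m r} conj(S_{v r}) / S_{0 r} (S is real).\<close>
definition N :: "nat \<Rightarrow> nat \<Rightarrow> nat \<Rightarrow> real" where
  "N l m v = (\<Sum>r<8. S l r * S m r * S v r / S 0 r)"

text \<open>Linear forms in the characters as coefficient vectors; st^* as outer product.\<close>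
definition e :: "nat \<Rightarrow> nat \<Rightarrow> int" where
  "e a = (\<lambda>i. if i = a then 1 else 0)"

definition outer :: "(nat \<Rightarrow> int) \<Rightarrow> (nat \<Rightarrow> int) \<Rightarrow> nat \<Rightarrow> nat \<Rightarrow> int" where
  "outer s t = (\<lambda>i j. s i * t j)"

definition E :: "nat \<Rightarrow> nat \<Rightarrow> nat \<Rightarrow> nat \<Rightarrow> int" where
  "E a b = outer (e a) (e b)"

definition s2 :: "nat \<Rightarrow> int" where "s2 = (\<lambda>i. e 0 i + e 1 i + 2 * e 2 i)"
definition s3 :: "nat \<Rightarrow> int" where "s3 = (\<lambda>i. e 0 i + e 1 i + 2 * e 3 i)"
definition s4 :: "nat \<Rightarrow> int" where "s4 = (\<lambda>i. e 0 i + e 2 i + e 6 i)"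
definition s5 :: "nat \<Rightarrow> int" where "s5 = (\<lambda>i. e 0 i + e 3 i + e 6 i)"

definition Z3 :: "nat \<Rightarrow> nat \<Rightarrow> int" where
  "Z3 = (\<lambda>i j. outer (\<lambda>k. e 0 k + e 1 k + e 2 k + e 3 k) (\<lambda>k. e 0 k + e 1 k + e 2 k + e 3 k) i j
          + E 2 3 i j + E 3 2 i j - E 2 2 i j - E 3 3 i j)"

definition Z23 :: "nat \<Rightarrow> nat \<Rightarrow> int" where "Z23 = outer s2 s3"
definition Z32 :: "nat \<Rightarrow> nat \<Rightarrow> int" where "Z32 = outer s3 s2"
definition Z45 :: "nat \<Rightarrow> nat \<Rightarrow> int" where "Z45 = outer s4 s5"
definition Z54 :: "nat \<Rightarrow> nat \<Rightarrow> int" where "Z54 = outer s5 s4"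

definition Zp45 :: "nat \<Rightarrow> nat \<Rightarrow> int" where
  "Zp45 = (\<lambda>i j. outer (\<lambda>k. e 0 k + e 3 k) (\<lambda>k. e 0 k + e 2 k) i j
          + E 1 6 i j + E 3 6 i j + E 6 1 i j + E 6 2 i j + E 7 7 i j)"

definition Zp54 :: "nat \<Rightarrow> nat \<Rightarrow> int" where
  "Zp54 = (\<lambda>i j. Zp45 j i)"

definition trace8 :: "(nat \<Rightarrow> nat \<Rightarrow> int) \<Rightarrow> int" where
  "trace8 Z = (\<Sum>m<8. Z m m)"

text \<open>A nimrep of dimension n: G l is an n x n non-negative integer matrix for each primary l<8.
  All primaries are self-conjugate, so G_{bar l} = G_l^t says G_l is symmetric.\<close>
definition nimrep :: "nat \<Rightarrow> (nat \<Rightarrow> nat \<Rightarrow> nat \<Rightarrow> nat) \<Rightarrow> bool" where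
  "nimrep n G \<longleftrightarrow>
     (\<forall>i<n. \<forall>j<n. G 0 i j = (if i = j then 1 else 0)) \<and>
     (\<forall>l<8. \<forall>i<n. \<forall>j<n. G l i j = G l j i) \<and>
     (\<forall>l<8. \<forall>m<8. \<forall>i<n. \<forall>j<n.
        real (\<Sum>k<n. G l i k * G m k j) = (\<Sum>v<8. N l m v * real (G v i j)))"

definition nimrep_equiv :: "nat \<Rightarrow> (nat \<Rightarrow> nat \<Rightarrow> nat \<Rightarrow> nat) \<Rightarrow> (nat \<Rightarrow> nat \<Rightarrow> nat \<Rightarrow> nat) \<Rightarrow> bool" where
  "nimrep_equiv n G H \<longleftrightarrow>
     (\<exists>p. bij_betw p {..<n} {..<n} \<and> (\<forall>l<8. \<forall>i<n. \<forall>j<n. H l i j = G l (p i) (p j)))"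

definition unitary_mat :: "nat \<Rightarrow> (nat \<Rightarrow> nat \<Rightarrow> complex) \<Rightarrow> bool" where
  "unitary_mat n U \<longleftrightarrow>
     (\<forall>i<n. \<forall>j<n. (\<Sum>k<n. cnj (U k i) * U k j) = (if i = j then 1 else 0))"

text \<open>G matches Z: n = Tr Z and there is a unitary U with U^* G_l U diagonal with diagonal entries
  S_{l f(i)}/S_{0 f(i)}, where f lists Exp(Z) with multiplicity.\<close>
definition matches :: "(nat \<Rightarrow> nat \<Rightarrow> int) \<Rightarrow> nat \<Rightarrow> (nat \<Rightarrow> nat \<Rightarrow> nat \<Rightarrow> nat) \<Rightarrow> bool" where
  "matches Z n G \<longleftrightarrow> int n = trace8 Z \<and>
     (\<exists>U f. unitary_mat n U \<and> (\<forall>i<n. f i < (8::nat)) \<and>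
        (\<forall>m<8. int (card {i. i < n \<and> f i = m}) = Z m m) \<and>
        (\<forall>l<8. \<forall>i<n. \<forall>j<n.
           (\<Sum>k<n. \<Sum>k'<n. cnj (U k i) * of_nat (G l k k') * U k' j) =
           (if i = j then complex_of_real (S l (f i) / S 0 (f i)) else 0)))"

end

theory Submission
  imports Defs "Jordan_Normal_Form.Determinant"
begin



lemma unitary_rows:
  assumes u: "unitary_mat n U" and ij: "i < n" "j < n"
  shows "(\<Sum>k<n. U i k * cnj (U j k)) = (if i = j then 1 else 0)"
proof -
  define A where "A = mat n n (\<lambda>(i,j). cnj (U j i))"
  define B where "B = mat n n (\<lambda>(i,j). U i j)"
  have A: "A \<in> carrier_mat n n" and B: "B \<in> carrier_mat n n" by (auto simp: A_def B_def)
  have "A * B = 1\<^sub>m n"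
    by (rule eq_matI) (use u in \<open>auto simp: A_def B_def scalar_prod_def unitary_mat_def atLeast0LessThan\<close>)
  then have "B * A = 1\<^sub>m n" by (rule mat_mult_left_right_inverse[OF A B])
  then have "(B * A) $$ (i,j) = 1\<^sub>m n $$ (i,j)" by simp
  then show ?thesis using ij by (simp add: A_def B_def scalar_prod_def atLeast0LessThan)
qed

lemma sum_fib:
  assumes "\<forall>i<(n::nat). f i < (8::nat)"
  shows "(\<Sum>i<n. g (f i)) = (\<Sum>m<8. of_nat (card {i. i < n \<and> f i = m}) * (g m :: 'a::comm_ring_1))"
proof -
  have "(\<Sum>i<n. g (f i)) = (\<Sum>i<n. \<Sum>m<8. if f i = m then g m else 0)"
    using assms by (intro sum.cong) (auto simp: sum.delta)
  also have "\<dots> = (\<Sum>m<8. \<Sum>i<n. if f i = m then g m else 0)" by (rule sum.swap)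
  also have "\<dots> = (\<Sum>m<8. of_nat (card {i. i < n \<and> f i = m}) * g m)"
  proof (intro sum.cong refl)
    fix m
    have "(\<Sum>i<n. if f i = m then g m else 0) = of_nat (card ({..<n} \<inter> {i. f i = m})) * g m"
      by (simp add: sum.If_cases)
    moreover have "{..<n} \<inter> {i. f i = m} = {i. i < n \<and> f i = m}" by auto
    ultimately show "(\<Sum>i<n. if f i = m then g m else 0) = of_nat (card {i. i < n \<and> f i = m}) * g m"
      by simp
  qed
  finally show ?thesis .
qed

lemma trace_matches:
  assumes "matches Z n G" "l < 8"
  shows "real (\<Sum>k<n. G l k k) = (\<Sum>m<8. real_of_int (Z m m) * (S l m / S 0 m))"
proof -
  from assms obtain U f where u: "unitary_mat n U" and f: "\<forall>i<n. f i < (8::nat)"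
    and c: "\<forall>m<8. int (card {i. i < n \<and> f i = m}) = Z m m"
    and d: "\<forall>i<n. \<forall>j<n. (\<Sum>k<n. \<Sum>k'<n. cnj (U k i) * of_nat (G l k k') * U k' j) =
           (if i = j then complex_of_real (S l (f i) / S 0 (f i)) else 0)"
    unfolding matches_def by blast
  have "(\<Sum>i<n. \<Sum>k<n. \<Sum>k'<n. cnj (U k i) * of_nat (G l k k') * U k' i)
      = (\<Sum>k<n. \<Sum>k'<n. of_nat (G l k k') * (\<Sum>i<n. U k' i * cnj (U k i)))"
  proof -
    have "(\<Sum>i<n. \<Sum>k<n. \<Sum>k'<n. cnj (U k i) * of_nat (G l k k') * U k' i)
        = (\<Sum>k<n. \<Sum>i<n. \<Sum>k'<n. cnj (U k i) * of_nat (G l k k') * U k' i)"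
      by (rule sum.swap)
    also have "\<dots> = (\<Sum>k<n. \<Sum>k'<n. \<Sum>i<n. cnj (U k i) * of_nat (G l k k') * U k' i)"
      by (intro sum.cong refl sum.swap)
    also have "\<dots> = (\<Sum>k<n. \<Sum>k'<n. of_nat (G l k k') * (\<Sum>i<n. U k' i * cnj (U k i)))"
      by (intro sum.cong refl) (simp add: sum_distrib_left mult_ac)
    finally show ?thesis .
  qed
  also have "\<dots> = (\<Sum>k<n. \<Sum>k'<n. of_nat (G l k k') * (if k' = k then 1 else 0))"
    using unitary_rows[OF u] by (intro sum.cong refl) simp
  also have "\<dots> = (\<Sum>k<n. \<Sum>k'<n. if k' = k then of_nat (G l k k') else 0)"
    by (intro sum.cong refl) simp
  also have "\<dots> = (\<Sum>k<n. of_nat (G l k k))" by (simp add: sum.delta)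
  also have "\<dots> = of_nat (\<Sum>k<n. G l k k)" by simp
  finally have 1: "(\<Sum>i<n. \<Sum>k<n. \<Sum>k'<n. cnj (U k i) * of_nat (G l k k') * U k' i) = of_nat (\<Sum>k<n. G l k k)" .
  have "(\<Sum>i<n. \<Sum>k<n. \<Sum>k'<n. cnj (U k i) * of_nat (G l k k') * U k' i)
     = (\<Sum>i<n. complex_of_real (S l (f i) / S 0 (f i)))"
    using d by (intro sum.cong refl) simp
  also have "\<dots> = complex_of_real (\<Sum>i<n. S l (f i) / S 0 (f i))" by simp
  also have "(\<Sum>i<n. S l (f i) / S 0 (f i)) = (\<Sum>m<8. of_nat (card {i. i < n \<and> f i = m}) * (S l m / S 0 m))"
    by (rule sum_fib[OF f])
  also have "\<dots> = (\<Sum>m<8. real_of_int (Z m m) * (S l m / S 0 m))"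
  proof (intro sum.cong refl)
    fix m assume "m \<in> {..<(8::nat)}"
    then have "int (card {i. i < n \<and> f i = m}) = Z m m" using c by simp
    then have "real_of_int (int (card {i. i < n \<and> f i = m})) = real_of_int (Z m m)" by simp
    then show "of_nat (card {i. i < n \<and> f i = m}) * (S l m / S 0 m) = real_of_int (Z m m) * (S l m / S 0 m)"
      by simp
  qed
  finally have "complex_of_real (real (\<Sum>k<n. G l k k)) = complex_of_real (\<Sum>m<8. real_of_int (Z m m) * (S l m / S 0 m))"
    using 1 by simp
  then show ?thesis by (simp only: of_real_eq_iff)
qed


definition Ntab :: "int list list list" where "Ntab = [[[1,0,0,0,0,0,0,0],[0,1,0,0,0,0,0,0],[0,0,1,0,0,0,0,0],[0,0,0,1,0,0,0,0],[0,0,0,0,1,0,0,0],[0,0,0,0,0,1,0,0],[0,0,0,0,0,0,1,0],[0,0,0,0,0,0,0,1]],[[0,1,0,0,0,0,0,0],[1,0,0,0,0,0,0,0],[0,0,1,0,0,0,0,0],[0,0,0,1,0,0,0,0],[0,0,0,0,1,0,0,0],[0,0,0,0,0,1,0,0],[0,0,0,0,0,0,0,1],[0,0,0,0,0,0,1,0]],[[0,0,1,0,0,0,0,0],[0,0,1,0,0,0,0,0],[1,1,1,0,0,0,0,0],[0,0,0,0,1,1,0,0],[0,0,0,1,0,1,0,0],[0,0,0,1,1,0,0,0],[0,0,0,0,0,0,1,1],[0,0,0,0,0,0,1,1]],[[0,0,0,1,0,0,0,0],[0,0,0,1,0,0,0,0],[0,0,0,0,1,1,0,0],[1,1,0,1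,0,0,0,0],[0,0,1,0,0,1,0,0],[0,0,1,0,1,0,0,0],[0,0,0,0,0,0,1,1],[0,0,0,0,0,0,1,1]],[[0,0,0,0,1,0,0,0],[0,0,0,0,1,0,0,0],[0,0,0,1,0,1,0,0],[0,0,1,0,0,1,0,0],[1,1,0,0,1,0,0,0],[0,0,1,1,0,0,0,0],[0,0,0,0,0,0,1,1],[0,0,0,0,0,0,1,1]],[[0,0,0,0,0,1,0,0],[0,0,0,0,0,1,0,0],[0,0,0,1,1,0,0,0],[0,0,1,0,1,0,0,0],[0,0,1,1,0,0,0,0],[1,1,0,0,0,1,0,0],[0,0,0,0,0,0,1,1],[0,0,0,0,0,0,1,1]],[[0,0,0,0,0,0,1,0],[0,0,0,0,0,0,0,1],[0,0,0,0,0,0,1,1],[0,0,0,0,0,0,1,1],[0,0,0,0,0,0,1,1],[0,0,0,0,0,0,1,1],[1,0,1,1,1,1,0,0],[0,1,1,1,1,1,0,0]],[[0,0,0,0,0,0,0,1],[0,0,0,0,0,0,1,0],[0,0,0,0,0,0,1,1],[0,0,0,0,0,0,1,1],[0,0,0,0,0,0,1,1],[0,0,0,0,0,0,1,1],[0,1,1,1,1,1,0,0],[1,0,1,1,1,1,0,0]]]"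

definition Nint :: "nat \<Rightarrow> nat \<Rightarrow> nat \<Rightarrow> int" where
 "Nint l m v = (\<Sum>r<8. S_int!l!r * S_int!m!r * S_int!v!r * (6 div S_int!0!r))"

lemma S0_row: "S_int!0 = [1,1,2,2,2,2,3,3]" by (simp add: S_int_def)

lemma N_int: "N l m v = real_of_int (Nint l m v) / 216"
  unfolding N_def Nint_def S_def
  by (simp add: numeral_eq_Suc lessThan_Suc S0_row field_simps)

lemma tab: "list_all (\<lambda>l. list_all (\<lambda>m. list_all (\<lambda>v. Nint l m v = 216 * Ntab!l!m!v) [0..<8]) [0..<8]) [0..<8]"
  by code_simp

lemma N_tab: assumes "l < 8" "m < 8" "v < 8" shows "N l m v = real_of_int (Ntab!l!m!v)"
proof -
  have "Nint l m v = 216 * Ntab!l!m!v" using tab assms by (simp add: list_all_iff)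
  then show ?thesis by (simp add: N_int)
qed

lemma sum2: "(\<Sum>k<(2::nat). f k) = f 0 + f 1"
  by (simp add: numeral_eq_Suc)

lemma sum8: "(\<Sum>k<(8::nat). f k) = f 0 + f 1 + f 2 + f 3 + f 4 + f 5 + f 6 + f 7"
  by (simp add: numeral_eq_Suc lessThan_Suc add_ac)

lemma all2: "(\<forall>i<(2::nat). P i) \<longleftrightarrow> P 0 \<and> P 1"
  by (simp add: eval_nat_numeral All_less_Suc conj_ac)

lemma all8: "(\<forall>i<(8::nat). P i) \<longleftrightarrow> P 0 \<and> P 1 \<and> P 2 \<and> P 3 \<and> P 4 \<and> P 5 \<and> P 6 \<and> P 7"
  by (simp add: eval_nat_numeral All_less_Suc conj_ac)

definition Gof :: "nat list \<Rightarrow> nat list \<Rightarrow> nat \<Rightarrow> nat \<Rightarrow> nat \<Rightarrow> nat" where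
  "Gof dg off l i j = (if i = j then dg!l else off!l)"

definition GA where "GA = Gof [1,1,2,2,2,2,0,0] [0,0,0,0,0,0,3,3]"
definition GB where "GB = Gof [1,0,1,1,1,1,2,1] [0,1,1,1,1,1,1,2]"
definition GC where "GC = Gof [1,0,1,1,1,1,1,2] [0,1,1,1,1,1,2,1]"

lemma nimrep_check:
  assumes d0: "dg!0 = 1" "off!0 = 0"
    and chk: "list_all (\<lambda>l. list_all (\<lambda>m. list_all (\<lambda>i. list_all (\<lambda>j.
      int (Gof dg off l i 0 * Gof dg off m 0 j + Gof dg off l i 1 * Gof dg off m 1 j) =
      (\<Sum>v\<leftarrow>[0..<8]. Ntab!l!m!v * int (Gof dg off v i j))) [0..<2]) [0..<2]) [0..<8]) [0..<8]"
  shows "nimrep 2 (Gof dg off)"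
  unfolding nimrep_def
proof (intro conjI allI impI)
  fix i j :: nat assume "i < 2" "j < 2"
  show "Gof dg off 0 i j = (if i = j then 1 else 0)" using d0 by (simp add: Gof_def)
next
  fix l i j :: nat
  show "Gof dg off l i j = Gof dg off l j i" by (simp add: Gof_def)
next
  fix l m i j :: nat assume lm: "l < 8" "m < 8" and ij: "i < 2" "j < 2"
  have e: "int (Gof dg off l i 0 * Gof dg off m 0 j + Gof dg off l i 1 * Gof dg off m 1 j) =
      (\<Sum>v<8. Ntab!l!m!v * int (Gof dg off v i j))"
  proof -
    have "\<forall>l\<in>set [0..<8]. \<forall>m\<in>set [0..<8]. \<forall>i\<in>set [0..<2]. \<forall>j\<in>set [0..<2].
      int (Gof dg off l i 0 * Gof dg off m 0 j + Gof dg off l i 1 * Gof dg off m 1 j) =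
      (\<Sum>v\<leftarrow>[0..<8]. Ntab!l!m!v * int (Gof dg off v i j))"
      using chk by (simp only: list_all_iff)
    then have "int (Gof dg off l i 0 * Gof dg off m 0 j + Gof dg off l i 1 * Gof dg off m 1 j) =
      (\<Sum>v\<leftarrow>[0..<8]. Ntab!l!m!v * int (Gof dg off v i j))"
    proof -
      have mem: "l \<in> {0..<8}" "m \<in> {0..<8}" "i \<in> {0..<2}" "j \<in> {0..<2}" using lm ij by auto
      from this \<open>\<forall>l\<in>set [0..<8]. _\<close> show ?thesis by (simp only: set_upt)
    qed
    then show ?thesis by (simp only: interv_sum_list_conv_sum_set_nat set_upt atLeast0LessThan)
  qed
  have "real (\<Sum>k<2. Gof dg off l i k * Gof dg off m k j) = real_of_int (int (Gof dg off l i 0 * Gof dg off m 0 j + Gof dg off l i 1 * Gof dg off m 1 j))"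
    by (simp add: sum2)
  also have "\<dots> = real_of_int (\<Sum>v<8. Ntab!l!m!v * int (Gof dg off v i j))" by (simp only: e)
  also have "\<dots> = (\<Sum>v<8. N l m v * real (Gof dg off v i j))"
  proof -
    have "real_of_int (\<Sum>v<8. Ntab!l!m!v * int (Gof dg off v i j)) = (\<Sum>v<8. real_of_int (Ntab!l!m!v) * real (Gof dg off v i j))"
      by (simp only: of_int_sum of_int_mult of_int_of_nat_eq)
    also have "\<dots> = (\<Sum>v<8. N l m v * real (Gof dg off v i j))"
      by (rule sum.cong[OF refl]) (use lm in \<open>simp only: N_tab lessThan_iff\<close>)
    finally show ?thesis .
  qed
  finally show "real (\<Sum>k<2. Gof dg off l i k * Gof dg off m k j) = (\<Sum>v<8. N l m v * real (Gof dg off v i j))" .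
qed

lemma nimrep_GA: "nimrep 2 GA"
  unfolding GA_def by (rule nimrep_check) (simp, simp, code_simp)
lemma nimrep_GB: "nimrep 2 GB"
  unfolding GB_def by (rule nimrep_check) (simp, simp, code_simp)
lemma nimrep_GC: "nimrep 2 GC"
  unfolding GC_def by (rule nimrep_check) (simp, simp, code_simp)




definition hh :: "nat \<Rightarrow> nat \<Rightarrow> real" where "hh k i = (if k = 1 \<and> i = 1 then -1 else 1)"
definition UH :: "nat \<Rightarrow> nat \<Rightarrow> complex" where "UH k i = complex_of_real (hh k i / sqrt 2)"
definition ff :: "nat \<Rightarrow> nat \<Rightarrow> nat" where "ff m0 i = (if i = 0 then 0 else m0)"

lemma sqrt2_sq: "x / sqrt 2 * (y / sqrt 2) = x * y / (2::real)"
  by (simp add: field_simps)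

lemma UH_prod: "cnj (UH k i) * a * UH k' j = a * complex_of_real (hh k i * hh k' j / 2)"
proof -
  have "cnj (UH k i) * a * UH k' j = a * (complex_of_real (hh k i / sqrt 2) * complex_of_real (hh k' j / sqrt 2))"
    by (simp add: UH_def)
  also have "\<dots> = a * complex_of_real (hh k i * hh k' j / 2)"
    by (simp only: of_real_mult[symmetric] sqrt2_sq)
  finally show ?thesis .
qed

lemma UH_prod1: "cnj (UH k i) * UH k' j = complex_of_real (hh k i * hh k' j / 2)"
proof -
  have "cnj (UH k i) * 1 * UH k' j = 1 * complex_of_real (hh k i * hh k' j / 2)" by (rule UH_prod)
  then show ?thesis by simp
qed

lemma unitary_UH: "unitary_mat 2 UH"
  unfolding unitary_mat_def all2 sum2 UH_prod1 by (simp add: hh_def)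

lemma card2: "card {i::nat. i < 2 \<and> P i} = (if P 0 then 1 else 0) + (if P 1 then 1 else 0)"
proof -
  have e: "{i::nat. i < 2 \<and> P i} = (if P 0 then {0} else {}) \<union> (if P 1 then {1} else {})"
  proof (rule Set.set_eqI, rule iffI)
    fix x :: nat assume "x \<in> {i::nat. i < 2 \<and> P i}"
    then have "x = 0 \<or> x = 1" "P x" by auto
    then show "x \<in> (if P 0 then {0} else {}) \<union> (if P 1 then {1} else {})" by auto
  next
    fix x :: nat assume "x \<in> (if P 0 then {0} else {}) \<union> (if P 1 then {1} else {})"
    then show "x \<in> {i::nat. i < 2 \<and> P i}" by (auto split: if_splits)
  qed
  show ?thesis unfolding e by auto
qed


lemma sum_two:
  assumes "m0 \<noteq> 0"
  shows "(\<Sum>m<(8::nat). (if m = 0 \<or> m = m0 then 1 else 0) * (g m :: real)) =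
         (\<Sum>m<8. (if m = 0 then g m else 0)) + (\<Sum>m<8. (if m = m0 then g m else 0))"
  unfolding sum.distrib[symmetric] using assms by (intro sum.cong refl) auto

lemma matches_check:
  assumes diag: "\<forall>m<8. Z m m = (if m = 0 \<or> m = m0 then 1 else 0)" and m0: "m0 \<noteq> 0" "m0 < 8"
    and eig: "\<forall>l<8. \<forall>i<2. \<forall>j<2. (\<Sum>k<2. \<Sum>k'<2. real (G l k k') * (hh k i * hh k' j / 2)) =
                 (if i = j then S l (ff m0 i) / S 0 (ff m0 i) else 0)"
  shows "matches Z 2 G" "trace8 Z = 2"
proof -
  have "real_of_int (trace8 Z) = (\<Sum>m<8. (if m = 0 \<or> m = m0 then 1 else 0) * (1::real))"
    unfolding trace8_def of_int_sum using diag by (intro sum.cong refl) auto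
  also have "\<dots> = 2" unfolding sum_two[OF m0(1)] using m0 by (simp add: sum.delta)
  finally show tr: "trace8 Z = 2" by simp
  show "matches Z 2 G"
    unfolding matches_def
  proof (intro conjI exI[of _ UH] exI[of _ "ff m0"])
    show "int 2 = trace8 Z" using tr by simp
    show "unitary_mat 2 UH" by (rule unitary_UH)
    show "\<forall>i<2. ff m0 i < 8" using m0 by (simp add: ff_def)
    show "\<forall>m<8. int (card {i. i < 2 \<and> ff m0 i = m}) = Z m m"
      using diag m0 by (auto simp: card2 ff_def)
    show "\<forall>l<8. \<forall>i<2. \<forall>j<2. (\<Sum>k<2. \<Sum>k'<2. cnj (UH k i) * of_nat (G l k k') * UH k' j) =
           (if i = j then complex_of_real (S l (ff m0 i) / S 0 (ff m0 i)) else 0)"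
    proof (intro allI impI)
      fix l i j :: nat assume h: "l < 8" "i < 2" "j < 2"
      have "(\<Sum>k<2. \<Sum>k'<2. cnj (UH k i) * of_nat (G l k k') * UH k' j)
          = complex_of_real (\<Sum>k<2. \<Sum>k'<2. real (G l k k') * (hh k i * hh k' j / 2))"
        by (simp only: UH_prod of_real_sum of_real_mult of_real_of_nat_eq)
      also have "\<dots> = complex_of_real (if i = j then S l (ff m0 i) / S 0 (ff m0 i) else 0)"
        using eig h by simp
      finally show "(\<Sum>k<2. \<Sum>k'<2. cnj (UH k i) * of_nat (G l k k') * UH k' j) =
           (if i = j then complex_of_real (S l (ff m0 i) / S 0 (ff m0 i)) else 0)" by simp
    qed
  qed
qed

lemma trace_Z:
  assumes "matches Z 2 H" and diag: "\<forall>m<8. Z m m = (if m = 0 \<or> m = m0 then 1 else 0)"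
    and m0: "m0 \<noteq> 0" "m0 < 8" and l: "l < 8"
  shows "real (H l 0 0 + H l 1 1) = S l 0 / S 0 0 + S l m0 / S 0 m0"
proof -
  have "real (H l 0 0 + H l 1 1) = real (\<Sum>k<2. H l k k)" by (simp add: sum2)
  also have "\<dots> = (\<Sum>m<8. real_of_int (Z m m) * (S l m / S 0 m))"
    by (rule trace_matches[OF assms(1) l])
  also have "\<dots> = (\<Sum>m<8. (if m = 0 \<or> m = m0 then 1 else 0) * (S l m / S 0 m))"
    using diag by (intro sum.cong refl) auto
  also have "\<dots> = S l 0 / S 0 0 + S l m0 / S 0 m0"
    unfolding sum_two[OF m0(1)] using m0 by (simp add: sum.delta)
  finally show ?thesis .
qed

lemma tr_sum2:
  assumes nr: "nimrep 2 H" and tr: "\<forall>v<8. H v 0 0 + H v 1 1 = tau!v" and lm: "l < 8" "m < 8"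
  shows "H l 0 0 * H m 0 0 + H l 0 1 * H m 1 0 + H l 1 0 * H m 0 1 + H l 1 1 * H m 1 1
         = nat (\<Sum>v<8. Ntab!l!m!v * int (tau!v))"
proof -
  have prod: "\<forall>i<2. \<forall>j<2. real (\<Sum>k<2. H l i k * H m k j) = (\<Sum>v<8. N l m v * real (H v i j))"
    using nr lm unfolding nimrep_def by blast
  have e0: "real (H l 0 0 * H m 0 0 + H l 0 1 * H m 1 0) = (\<Sum>v<8. N l m v * real (H v 0 0))"
    using prod by (simp add: sum2)
  have e1: "real (H l 1 0 * H m 0 1 + H l 1 1 * H m 1 1) = (\<Sum>v<8. N l m v * real (H v 1 1))"
    using prod by (simp add: sum2)
  have "real (H l 0 0 * H m 0 0 + H l 0 1 * H m 1 0 + H l 1 0 * H m 0 1 + H l 1 1 * H m 1 1)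
      = real (H l 0 0 * H m 0 0 + H l 0 1 * H m 1 0) + real (H l 1 0 * H m 0 1 + H l 1 1 * H m 1 1)"
    by simp
  also have "\<dots> = (\<Sum>v<8. N l m v * real (H v 0 0 + H v 1 1))"
    unfolding e0 e1 sum.distrib[symmetric] by (simp add: distrib_left)
  also have "\<dots> = (\<Sum>v<8. real_of_int (Ntab!l!m!v) * real_of_int (int (tau!v)))"
    using tr lm by (intro sum.cong refl) (simp add: N_tab)
  also have "\<dots> = real_of_int (\<Sum>v<8. Ntab!l!m!v * int (tau!v))"
    by (simp only: of_int_sum of_int_mult)
  finally have "int (H l 0 0 * H m 0 0 + H l 0 1 * H m 1 0 + H l 1 0 * H m 0 1 + H l 1 1 * H m 1 1)
      = (\<Sum>v<8. Ntab!l!m!v * int (tau!v))"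
    by (metis of_int_eq_iff of_int_of_nat_eq)
  then show ?thesis by linarith
qed

lemma solveA:
  fixes a b c t q :: nat
  assumes "a + c = t" "a*a + b*b + b*b + c*c = q" "2*q = t*t"
  shows "b = 0 \<and> a = t div 2 \<and> c = t div 2"
proof -
  have "(int a - int c)^2 + (2 * int b)^2 = 2 * int q - int t * int t"
    using assms(1,2) by (auto simp: power2_eq_square algebra_simps)
  also have "\<dots> = 0" using assms(3) by (metis diff_self of_nat_mult of_nat_numeral)
  finally have h: "(int a - int c)^2 + (2 * int b)^2 = 0" .
  have "int a - int c = 0 \<and> 2 * int b = 0" using sum_power2_eq_zero_iff h by blast
  then show ?thesis using assms(1) by auto
qed

lemma solveB:
  fixes a b c t q r :: nat
  assumes "a + c = t" "a*a + b*b + b*b + c*c = q" "b + b = r" "2*q = t*t + r*r"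
  shows "b = r div 2 \<and> a = t div 2 \<and> c = t div 2"
proof -
  have "(int a - int c)^2 = 2 * int q - int t * int t - int r * int r"
    using assms(1,2,3) by (auto simp: power2_eq_square algebra_simps)
  also have "\<dots> = 0" using assms(4) by (metis add_diff_cancel_left' diff_self of_nat_add of_nat_mult of_nat_numeral)
  finally have "int a = int c" by simp
  then show ?thesis using assms(1,3) by auto
qed

lemma solve0:
  fixes a b c k :: nat
  assumes "a + c = 0" "a*a + b*b + b*b + c*c = 2*(k*k)"
  shows "a = 0 \<and> c = 0 \<and> b = k"
proof -
  have "a = 0" "c = 0" using assms(1) by auto
  then have "b * b = k * k" using assms(2) by simp
  then have "b^2 = k^2" by (simp add: power2_eq_square)
  then have "b = k" by (simp add: power2_eq_iff_nonneg)
  then show ?thesis using \<open>a = 0\<close> \<open>c = 0\<close> by simp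
qed
lemma uniqA:
  assumes nr: "nimrep 2 H" and tr: "\<forall>v<8. H v 0 0 + H v 1 1 = [2,2,4,4,4,4,0,0]!v"
  shows "\<forall>l<8. \<forall>i<2. \<forall>j<2. H l i j = GA l i j"
proof -
  have sym: "\<And>l. l < 8 \<Longrightarrow> H l 1 0 = H l 0 1" using nr unfolding nimrep_def by auto
  have t: "\<And>l. l < 8 \<Longrightarrow> H l 0 0 + H l 1 1 = [2,2,4,4,4,4,0,0]!l" using tr by simp
  have P: "\<And>l m. l < 8 \<Longrightarrow> m < 8 \<Longrightarrow> H l 0 0 * H m 0 0 + H l 0 1 * H m 1 0 + H l 1 0 * H m 0 1 + H l 1 1 * H m 1 1 = nat (\<Sum>v<8. Ntab!l!m!v * int ([2,2,4,4,4,4,0,0]!v))"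
    using tr_sum2[OF nr tr] by blast
  have L0: "H 0 0 0 = 1 \<and> H 0 0 1 = 0 \<and> H 0 1 1 = 1" using nr unfolding nimrep_def by auto
  have t1: "H 1 0 0 + H 1 1 1 = 2" using t[of 1] by simp
  have q1: "H 1 0 0 * H 1 0 0 + H 1 0 1 * H 1 0 1 + H 1 0 1 * H 1 0 1 + H 1 1 1 * H 1 1 1 = 2"
    using P[of 1 1] sym[of 1] by (simp add: sum8 Ntab_def)
  have L1: "H 1 0 1 = 0 \<and> H 1 0 0 = 1 \<and> H 1 1 1 = 1"
    using solveA[OF t1 q1] by simp
  have t2: "H 2 0 0 + H 2 1 1 = 4" using t[of 2] by simp
  have q2: "H 2 0 0 * H 2 0 0 + H 2 0 1 * H 2 0 1 + H 2 0 1 * H 2 0 1 + H 2 1 1 * H 2 1 1 = 8"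
    using P[of 2 2] sym[of 2] by (simp add: sum8 Ntab_def)
  have L2: "H 2 0 1 = 0 \<and> H 2 0 0 = 2 \<and> H 2 1 1 = 2"
    using solveA[OF t2 q2] by simp
  have t3: "H 3 0 0 + H 3 1 1 = 4" using t[of 3] by simp
  have q3: "H 3 0 0 * H 3 0 0 + H 3 0 1 * H 3 0 1 + H 3 0 1 * H 3 0 1 + H 3 1 1 * H 3 1 1 = 8"
    using P[of 3 3] sym[of 3] by (simp add: sum8 Ntab_def)
  have L3: "H 3 0 1 = 0 \<and> H 3 0 0 = 2 \<and> H 3 1 1 = 2"
    using solveA[OF t3 q3] by simp
  have t4: "H 4 0 0 + H 4 1 1 = 4" using t[of 4] by simp
  have q4: "H 4 0 0 * H 4 0 0 + H 4 0 1 * H 4 0 1 + H 4 0 1 * H 4 0 1 + H 4 1 1 * H 4 1 1 = 8"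
    using P[of 4 4] sym[of 4] by (simp add: sum8 Ntab_def)
  have L4: "H 4 0 1 = 0 \<and> H 4 0 0 = 2 \<and> H 4 1 1 = 2"
    using solveA[OF t4 q4] by simp
  have t5: "H 5 0 0 + H 5 1 1 = 4" using t[of 5] by simp
  have q5: "H 5 0 0 * H 5 0 0 + H 5 0 1 * H 5 0 1 + H 5 0 1 * H 5 0 1 + H 5 1 1 * H 5 1 1 = 8"
    using P[of 5 5] sym[of 5] by (simp add: sum8 Ntab_def)
  have L5: "H 5 0 1 = 0 \<and> H 5 0 0 = 2 \<and> H 5 1 1 = 2"
    using solveA[OF t5 q5] by simp
  have t6: "H 6 0 0 + H 6 1 1 = 0" using t[of 6] by simp
  have q6: "H 6 0 0 * H 6 0 0 + H 6 0 1 * H 6 0 1 + H 6 0 1 * H 6 0 1 + H 6 1 1 * H 6 1 1 = 18"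
    using P[of 6 6] sym[of 6] by (simp add: sum8 Ntab_def)
  have L6: "H 6 0 0 = 0 \<and> H 6 1 1 = 0 \<and> H 6 0 1 = 3"
    using solve0[OF t6, of "H 6 0 1" 3] q6 by simp
  have t7: "H 7 0 0 + H 7 1 1 = 0" using t[of 7] by simp
  have q7: "H 7 0 0 * H 7 0 0 + H 7 0 1 * H 7 0 1 + H 7 0 1 * H 7 0 1 + H 7 1 1 * H 7 1 1 = 18"
    using P[of 7 7] sym[of 7] by (simp add: sum8 Ntab_def)
  have L7: "H 7 0 0 = 0 \<and> H 7 1 1 = 0 \<and> H 7 0 1 = 3"
    using solve0[OF t7, of "H 7 0 1" 3] q7 by simp
  show ?thesis
    unfolding all8 all2 GA_def Gof_def
    using L0 L1 L2 L3 L4 L5 L6 L7 sym[of 0] sym[of 1] sym[of 2] sym[of 3] sym[of 4] sym[of 5] sym[of 6] sym[of 7]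
    by simp
qed

lemma uniqB:
  assumes nr: "nimrep 2 H" and tr: "\<forall>v<8. H v 0 0 + H v 1 1 = [2,0,2,2,2,2,4,2]!v"
  shows "\<forall>l<8. \<forall>i<2. \<forall>j<2. H l i j = GB l i j"
proof -
  have sym: "\<And>l. l < 8 \<Longrightarrow> H l 1 0 = H l 0 1" using nr unfolding nimrep_def by auto
  have t: "\<And>l. l < 8 \<Longrightarrow> H l 0 0 + H l 1 1 = [2,0,2,2,2,2,4,2]!l" using tr by simp
  have P: "\<And>l m. l < 8 \<Longrightarrow> m < 8 \<Longrightarrow> H l 0 0 * H m 0 0 + H l 0 1 * H m 1 0 + H l 1 0 * H m 0 1 + H l 1 1 * H m 1 1 = nat (\<Sum>v<8. Ntab!l!m!v * int ([2,0,2,2,2,2,4,2]!v))"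
    using tr_sum2[OF nr tr] by blast
  have L0: "H 0 0 0 = 1 \<and> H 0 0 1 = 0 \<and> H 0 1 1 = 1" using nr unfolding nimrep_def by auto
  have t1: "H 1 0 0 + H 1 1 1 = 0" using t[of 1] by simp
  have q1: "H 1 0 0 * H 1 0 0 + H 1 0 1 * H 1 0 1 + H 1 0 1 * H 1 0 1 + H 1 1 1 * H 1 1 1 = 2"
    using P[of 1 1] sym[of 1] by (simp add: sum8 Ntab_def)
  have L1: "H 1 0 0 = 0 \<and> H 1 1 1 = 0 \<and> H 1 0 1 = 1"
    using solve0[OF t1, of "H 1 0 1" 1] q1 by simp
  have t2: "H 2 0 0 + H 2 1 1 = 2" using t[of 2] by simp
  have q2: "H 2 0 0 * H 2 0 0 + H 2 0 1 * H 2 0 1 + H 2 0 1 * H 2 0 1 + H 2 1 1 * H 2 1 1 = 4"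
    using P[of 2 2] sym[of 2] by (simp add: sum8 Ntab_def)
  have r2: "H 2 0 1 + H 2 0 1 = 2"
    using P[of 1 2] sym[of 1] sym[of 2] L1 by (simp add: sum8 Ntab_def)
  have L2: "H 2 0 1 = 1 \<and> H 2 0 0 = 1 \<and> H 2 1 1 = 1"
    using solveB[OF t2 q2 r2] by simp
  have t3: "H 3 0 0 + H 3 1 1 = 2" using t[of 3] by simp
  have q3: "H 3 0 0 * H 3 0 0 + H 3 0 1 * H 3 0 1 + H 3 0 1 * H 3 0 1 + H 3 1 1 * H 3 1 1 = 4"
    using P[of 3 3] sym[of 3] by (simp add: sum8 Ntab_def)
  have r3: "H 3 0 1 + H 3 0 1 = 2"
    using P[of 1 3] sym[of 1] sym[of 3] L1 by (simp add: sum8 Ntab_def)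
  have L3: "H 3 0 1 = 1 \<and> H 3 0 0 = 1 \<and> H 3 1 1 = 1"
    using solveB[OF t3 q3 r3] by simp
  have t4: "H 4 0 0 + H 4 1 1 = 2" using t[of 4] by simp
  have q4: "H 4 0 0 * H 4 0 0 + H 4 0 1 * H 4 0 1 + H 4 0 1 * H 4 0 1 + H 4 1 1 * H 4 1 1 = 4"
    using P[of 4 4] sym[of 4] by (simp add: sum8 Ntab_def)
  have r4: "H 4 0 1 + H 4 0 1 = 2"
    using P[of 1 4] sym[of 1] sym[of 4] L1 by (simp add: sum8 Ntab_def)
  have L4: "H 4 0 1 = 1 \<and> H 4 0 0 = 1 \<and> H 4 1 1 = 1"
    using solveB[OF t4 q4 r4] by simp
  have t5: "H 5 0 0 + H 5 1 1 = 2" using t[of 5] by simp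
  have q5: "H 5 0 0 * H 5 0 0 + H 5 0 1 * H 5 0 1 + H 5 0 1 * H 5 0 1 + H 5 1 1 * H 5 1 1 = 4"
    using P[of 5 5] sym[of 5] by (simp add: sum8 Ntab_def)
  have r5: "H 5 0 1 + H 5 0 1 = 2"
    using P[of 1 5] sym[of 1] sym[of 5] L1 by (simp add: sum8 Ntab_def)
  have L5: "H 5 0 1 = 1 \<and> H 5 0 0 = 1 \<and> H 5 1 1 = 1"
    using solveB[OF t5 q5 r5] by simp
  have t6: "H 6 0 0 + H 6 1 1 = 4" using t[of 6] by simp
  have q6: "H 6 0 0 * H 6 0 0 + H 6 0 1 * H 6 0 1 + H 6 0 1 * H 6 0 1 + H 6 1 1 * H 6 1 1 = 10"
    using P[of 6 6] sym[of 6] by (simp add: sum8 Ntab_def)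
  have r6: "H 6 0 1 + H 6 0 1 = 2"
    using P[of 1 6] sym[of 1] sym[of 6] L1 by (simp add: sum8 Ntab_def)
  have L6: "H 6 0 1 = 1 \<and> H 6 0 0 = 2 \<and> H 6 1 1 = 2"
    using solveB[OF t6 q6 r6] by simp
  have t7: "H 7 0 0 + H 7 1 1 = 2" using t[of 7] by simp
  have q7: "H 7 0 0 * H 7 0 0 + H 7 0 1 * H 7 0 1 + H 7 0 1 * H 7 0 1 + H 7 1 1 * H 7 1 1 = 10"
    using P[of 7 7] sym[of 7] by (simp add: sum8 Ntab_def)
  have r7: "H 7 0 1 + H 7 0 1 = 4"
    using P[of 1 7] sym[of 1] sym[of 7] L1 by (simp add: sum8 Ntab_def)
  have L7: "H 7 0 1 = 2 \<and> H 7 0 0 = 1 \<and> H 7 1 1 = 1"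
    using solveB[OF t7 q7 r7] by simp
  show ?thesis
    unfolding all8 all2 GB_def Gof_def
    using L0 L1 L2 L3 L4 L5 L6 L7 sym[of 0] sym[of 1] sym[of 2] sym[of 3] sym[of 4] sym[of 5] sym[of 6] sym[of 7]
    by simp
qed

lemma uniqC:
  assumes nr: "nimrep 2 H" and tr: "\<forall>v<8. H v 0 0 + H v 1 1 = [2,0,2,2,2,2,2,4]!v"
  shows "\<forall>l<8. \<forall>i<2. \<forall>j<2. H l i j = GC l i j"
proof -
  have sym: "\<And>l. l < 8 \<Longrightarrow> H l 1 0 = H l 0 1" using nr unfolding nimrep_def by auto
  have t: "\<And>l. l < 8 \<Longrightarrow> H l 0 0 + H l 1 1 = [2,0,2,2,2,2,2,4]!l" using tr by simp
  have P: "\<And>l m. l < 8 \<Longrightarrow> m < 8 \<Longrightarrow> H l 0 0 * H m 0 0 + H l 0 1 * H m 1 0 + H l 1 0 * H m 0 1 + H l 1 1 * H m 1 1 = nat (\<Sum>v<8. Ntab!l!m!v * int ([2,0,2,2,2,2,2,4]!v))"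
    using tr_sum2[OF nr tr] by blast
  have L0: "H 0 0 0 = 1 \<and> H 0 0 1 = 0 \<and> H 0 1 1 = 1" using nr unfolding nimrep_def by auto
  have t1: "H 1 0 0 + H 1 1 1 = 0" using t[of 1] by simp
  have q1: "H 1 0 0 * H 1 0 0 + H 1 0 1 * H 1 0 1 + H 1 0 1 * H 1 0 1 + H 1 1 1 * H 1 1 1 = 2"
    using P[of 1 1] sym[of 1] by (simp add: sum8 Ntab_def)
  have L1: "H 1 0 0 = 0 \<and> H 1 1 1 = 0 \<and> H 1 0 1 = 1"
    using solve0[OF t1, of "H 1 0 1" 1] q1 by simp
  have t2: "H 2 0 0 + H 2 1 1 = 2" using t[of 2] by simp
  have q2: "H 2 0 0 * H 2 0 0 + H 2 0 1 * H 2 0 1 + H 2 0 1 * H 2 0 1 + H 2 1 1 * H 2 1 1 = 4"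
    using P[of 2 2] sym[of 2] by (simp add: sum8 Ntab_def)
  have r2: "H 2 0 1 + H 2 0 1 = 2"
    using P[of 1 2] sym[of 1] sym[of 2] L1 by (simp add: sum8 Ntab_def)
  have L2: "H 2 0 1 = 1 \<and> H 2 0 0 = 1 \<and> H 2 1 1 = 1"
    using solveB[OF t2 q2 r2] by simp
  have t3: "H 3 0 0 + H 3 1 1 = 2" using t[of 3] by simp
  have q3: "H 3 0 0 * H 3 0 0 + H 3 0 1 * H 3 0 1 + H 3 0 1 * H 3 0 1 + H 3 1 1 * H 3 1 1 = 4"
    using P[of 3 3] sym[of 3] by (simp add: sum8 Ntab_def)
  have r3: "H 3 0 1 + H 3 0 1 = 2"
    using P[of 1 3] sym[of 1] sym[of 3] L1 by (simp add: sum8 Ntab_def)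
  have L3: "H 3 0 1 = 1 \<and> H 3 0 0 = 1 \<and> H 3 1 1 = 1"
    using solveB[OF t3 q3 r3] by simp
  have t4: "H 4 0 0 + H 4 1 1 = 2" using t[of 4] by simp
  have q4: "H 4 0 0 * H 4 0 0 + H 4 0 1 * H 4 0 1 + H 4 0 1 * H 4 0 1 + H 4 1 1 * H 4 1 1 = 4"
    using P[of 4 4] sym[of 4] by (simp add: sum8 Ntab_def)
  have r4: "H 4 0 1 + H 4 0 1 = 2"
    using P[of 1 4] sym[of 1] sym[of 4] L1 by (simp add: sum8 Ntab_def)
  have L4: "H 4 0 1 = 1 \<and> H 4 0 0 = 1 \<and> H 4 1 1 = 1"
    using solveB[OF t4 q4 r4] by simp
  have t5: "H 5 0 0 + H 5 1 1 = 2" using t[of 5] by simp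
  have q5: "H 5 0 0 * H 5 0 0 + H 5 0 1 * H 5 0 1 + H 5 0 1 * H 5 0 1 + H 5 1 1 * H 5 1 1 = 4"
    using P[of 5 5] sym[of 5] by (simp add: sum8 Ntab_def)
  have r5: "H 5 0 1 + H 5 0 1 = 2"
    using P[of 1 5] sym[of 1] sym[of 5] L1 by (simp add: sum8 Ntab_def)
  have L5: "H 5 0 1 = 1 \<and> H 5 0 0 = 1 \<and> H 5 1 1 = 1"
    using solveB[OF t5 q5 r5] by simp
  have t6: "H 6 0 0 + H 6 1 1 = 2" using t[of 6] by simp
  have q6: "H 6 0 0 * H 6 0 0 + H 6 0 1 * H 6 0 1 + H 6 0 1 * H 6 0 1 + H 6 1 1 * H 6 1 1 = 10"
    using P[of 6 6] sym[of 6] by (simp add: sum8 Ntab_def)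
  have r6: "H 6 0 1 + H 6 0 1 = 4"
    using P[of 1 6] sym[of 1] sym[of 6] L1 by (simp add: sum8 Ntab_def)
  have L6: "H 6 0 1 = 2 \<and> H 6 0 0 = 1 \<and> H 6 1 1 = 1"
    using solveB[OF t6 q6 r6] by simp
  have t7: "H 7 0 0 + H 7 1 1 = 4" using t[of 7] by simp
  have q7: "H 7 0 0 * H 7 0 0 + H 7 0 1 * H 7 0 1 + H 7 0 1 * H 7 0 1 + H 7 1 1 * H 7 1 1 = 10"
    using P[of 7 7] sym[of 7] by (simp add: sum8 Ntab_def)
  have r7: "H 7 0 1 + H 7 0 1 = 2"
    using P[of 1 7] sym[of 1] sym[of 7] L1 by (simp add: sum8 Ntab_def)
  have L7: "H 7 0 1 = 1 \<and> H 7 0 0 = 2 \<and> H 7 1 1 = 2"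
    using solveB[OF t7 q7 r7] by simp
  show ?thesis
    unfolding all8 all2 GC_def Gof_def
    using L0 L1 L2 L3 L4 L5 L6 L7 sym[of 0] sym[of 1] sym[of 2] sym[of 3] sym[of 4] sym[of 5] sym[of 6] sym[of 7]
    by simp
qed

lemma generic:
  assumes diag: "\<forall>m<8. Z m m = (if m = 0 \<or> m = m0 then 1 else 0)" and m0: "m0 \<noteq> 0" "m0 < 8"
    and nG: "nimrep 2 G"
    and eig: "\<forall>l<8. \<forall>i<2. \<forall>j<2. (\<Sum>k<2. \<Sum>k'<2. real (G l k k') * (hh k i * hh k' j / 2)) =
                 (if i = j then S l (ff m0 i) / S 0 (ff m0 i) else 0)"
    and tauS: "\<forall>v<8. S v 0 / S 0 0 + S v m0 / S 0 m0 = real (tau!v)"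
    and uq: "\<And>H. nimrep 2 H \<Longrightarrow> \<forall>v<8. H v 0 0 + H v 1 1 = tau!v \<Longrightarrow>
               \<forall>l<8. \<forall>i<2. \<forall>j<2. H l i j = G l i j"
  shows "\<exists>G. nimrep (nat (trace8 Z)) G \<and> matches Z (nat (trace8 Z)) G \<and>
       (\<forall>H. nimrep (nat (trace8 Z)) H \<and> matches Z (nat (trace8 Z)) H \<longrightarrow>
              nimrep_equiv (nat (trace8 Z)) G H)"
proof -
  have tr: "nat (trace8 Z) = 2" using matches_check(2)[of Z m0 G, OF diag m0 eig] by simp
  show ?thesis unfolding tr
  proof (intro exI[of _ G] conjI allI impI)
    show "nimrep 2 G" by (rule nG)
    show "matches Z 2 G" by (rule matches_check(1)[of Z m0 G, OF diag m0 eig])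
    fix H assume h: "nimrep 2 H \<and> matches Z 2 H"
    have "\<forall>v<8. H v 0 0 + H v 1 1 = tau!v"
    proof (intro allI impI)
      fix v :: nat assume v: "v < 8"
      have "real (H v 0 0 + H v 1 1) = real (tau!v)"
        using trace_Z[of Z H m0 v, OF conjunct2[OF h] diag m0 v] tauS v by simp
      then show "H v 0 0 + H v 1 1 = tau!v" by (simp only: of_nat_eq_iff)
    qed
    then have e: "\<forall>l<8. \<forall>i<2. \<forall>j<2. H l i j = G l i j" using uq h by blast
    show "nimrep_equiv 2 G H" unfolding nimrep_equiv_def
      by (rule exI[of _ id]) (use e in auto)
  qed
qed

lemma eigA: "\<forall>l<8. \<forall>i<2. \<forall>j<2. (\<Sum>k<2. \<Sum>k'<2. real (GA l k k') * (hh k i * hh k' j / 2)) =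
                 (if i = j then S l (ff 1 i) / S 0 (ff 1 i) else 0)"
  by (simp add: all8 all2 sum2 hh_def GA_def Gof_def ff_def S_def S_int_def)
lemma eigB: "\<forall>l<8. \<forall>i<2. \<forall>j<2. (\<Sum>k<2. \<Sum>k'<2. real (GB l k k') * (hh k i * hh k' j / 2)) =
                 (if i = j then S l (ff 6 i) / S 0 (ff 6 i) else 0)"
  by (simp add: all8 all2 sum2 hh_def GB_def Gof_def ff_def S_def S_int_def)
lemma eigC: "\<forall>l<8. \<forall>i<2. \<forall>j<2. (\<Sum>k<2. \<Sum>k'<2. real (GC l k k') * (hh k i * hh k' j / 2)) =
                 (if i = j then S l (ff 7 i) / S 0 (ff 7 i) else 0)"
  by (simp add: all8 all2 sum2 hh_def GC_def Gof_def ff_def S_def S_int_def)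

lemma tauA: "\<forall>v<8. S v 0 / S 0 0 + S v 1 / S 0 1 = real ([2,2,4,4,4,4,0,0]!v)"
  by (simp add: all8 S_def S_int_def)
lemma tauB: "\<forall>v<8. S v 0 / S 0 0 + S v 6 / S 0 6 = real ([2,0,2,2,2,2,4,2]!v)"
  by (simp add: all8 S_def S_int_def)
lemma tauC: "\<forall>v<8. S v 0 / S 0 0 + S v 7 / S 0 7 = real ([2,0,2,2,2,2,2,4]!v)"
  by (simp add: all8 S_def S_int_def)

lemma diag_Z3: "\<forall>m<8. Z3 m m = (if m = 0 \<or> m = 1 then 1 else 0)"
  by (simp add: all8 Z3_def outer_def E_def e_def)
lemma diag_Z23: "\<forall>m<8. Z23 m m = (if m = 0 \<or> m = 1 then 1 else 0)"
  by (simp add: all8 Z23_def outer_def s2_def s3_def e_def)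
lemma diag_Z32: "\<forall>m<8. Z32 m m = (if m = 0 \<or> m = 1 then 1 else 0)"
  by (simp add: all8 Z32_def outer_def s2_def s3_def e_def)
lemma diag_Z45: "\<forall>m<8. Z45 m m = (if m = 0 \<or> m = 6 then 1 else 0)"
  by (simp add: all8 Z45_def outer_def s4_def s5_def e_def)
lemma diag_Z54: "\<forall>m<8. Z54 m m = (if m = 0 \<or> m = 6 then 1 else 0)"
  by (simp add: all8 Z54_def outer_def s4_def s5_def e_def)
lemma diag_Zp45: "\<forall>m<8. Zp45 m m = (if m = 0 \<or> m = 7 then 1 else 0)"
  by (simp add: all8 Zp45_def outer_def E_def e_def)
lemma diag_Zp54: "\<forall>m<8. Zp54 m m = (if m = 0 \<or> m = 7 then 1 else 0)"
  using diag_Zp45 by (simp add: Zp54_def)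

lemma caseA:
  assumes "\<forall>m<8. Z m m = (if m = 0 \<or> m = 1 then 1 else 0)"
  shows "\<exists>G. nimrep (nat (trace8 Z)) G \<and> matches Z (nat (trace8 Z)) G \<and>
       (\<forall>H. nimrep (nat (trace8 Z)) H \<and> matches Z (nat (trace8 Z)) H \<longrightarrow>
              nimrep_equiv (nat (trace8 Z)) G H)"
  by (rule generic[of Z 1 GA "[2,2,4,4,4,4,0,0]", OF assms _ _ nimrep_GA eigA tauA uniqA]) simp_all
lemma caseB:
  assumes "\<forall>m<8. Z m m = (if m = 0 \<or> m = 6 then 1 else 0)"
  shows "\<exists>G. nimrep (nat (trace8 Z)) G \<and> matches Z (nat (trace8 Z)) G \<and>
       (\<forall>H. nimrep (nat (trace8 Z)) H \<and> matches Z (nat (trace8 Z)) H \<longrightarrow>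
              nimrep_equiv (nat (trace8 Z)) G H)"
  by (rule generic[of Z 6 GB "[2,0,2,2,2,2,4,2]", OF assms _ _ nimrep_GB eigB tauB uniqB]) simp_all
lemma caseC:
  assumes "\<forall>m<8. Z m m = (if m = 0 \<or> m = 7 then 1 else 0)"
  shows "\<exists>G. nimrep (nat (trace8 Z)) G \<and> matches Z (nat (trace8 Z)) G \<and>
       (\<forall>H. nimrep (nat (trace8 Z)) H \<and> matches Z (nat (trace8 Z)) H \<longrightarrow>
              nimrep_equiv (nat (trace8 Z)) G H)"
  by (rule generic[of Z 7 GC "[2,0,2,2,2,2,2,4]", OF assms _ _ nimrep_GC eigC tauC uniqC]) simp_all

theorem proposition6p4:
  shows "\<forall>Z \<in> {Z3, Z23, Z32, Z45, Z54, Zp45, Zp54}.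
     \<exists>G. nimrep (nat (trace8 Z)) G \<and> matches Z (nat (trace8 Z)) G \<and>
       (\<forall>H. nimrep (nat (trace8 Z)) H \<and> matches Z (nat (trace8 Z)) H \<longrightarrow>
              nimrep_equiv (nat (trace8 Z)) G H)"
proof -
  note a = caseA[of Z3, OF diag_Z3] caseA[of Z23, OF diag_Z23] caseA[of Z32, OF diag_Z32]
  note b = caseB[of Z45, OF diag_Z45] caseB[of Z54, OF diag_Z54]
  note c = caseC[of Zp45, OF diag_Zp45] caseC[of Zp54, OF diag_Zp54]
  show ?thesis using a b c by simp
qed

end
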